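(* Let $K$ be a field of characteristic zero, $n\ge4$ even, and $\mathfrak{g}$ a filiform Lie algebra of dimension $n$ whose associated graded Lie algebra is isomorphic to $Q_n$; concretely, $\mathfrak{g}$ has an adapted basis $\{e_1,\dots,e_n\}$ in which $[e_i,e_{n+1-i}]=(-1)^ie_n$ for $2\le i\le n-1$. Then $\chi(\mathfrak{g})=2$.
   Context: A filiform Lie algebra of dimension $n$ is a nilpotent Lie algebra with $\dim\mathfrak{g}^k=n-k$ for $2\le k\le n$ (lower central series $\mathfrak{g}^1=\mathfrak{g}$, $\mathfrak{g}^{k+1}=[\mathfrak{g},\mathfrak{g}^k]$). An adapted basis is a basis $\{e_1,\dots,e_n\}$ with $[e_1,e_i]=e_{i+1}$ ($2\le i\le n-1$), $[e_1,e_n]=0$, $[e_2,e_3]\in\langle e_5,\dots,e_n\rangle$; for such a basis one has $[e_i,e_j]\in\langle e_{i+j},\dots,e_n\rangle$ if $i+j\le n$ and $[e_i,e_j]=0$ if $i+j>n+1$. For even $n$, $Q_n$ is the Lie algebra with basis $e_1,\dots,e_n$ and nonzero brackets $[e_1,e_i]=e_{i+1}$ ($2\le i\le n-1$) and $[e_i,e_{n+1-i}]=(-1)^ie_n$ ($2\le i\le n/2$). For $\ell\in\mathfrak{g}^*$, $\mathfrak{g}(\ell)=\{y\in\mathfrak{g}\mid\ell([x,y])=0\ \forall x\in\mathfrak{g}\}$ and $\chi(\mathfrak{g})=\min_{\ell\in\mathfrak{g}^*}\dim\mathfrak{g}(\ell)$. *)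

theory Defs
  imports Complex_Main
begin

definition lie_algebra ::
  "('k::field \<Rightarrow> 'v::ab_group_add \<Rightarrow> 'v) \<Rightarrow> ('v \<Rightarrow> 'v \<Rightarrow> 'v) \<Rightarrow> bool" where
  "lie_algebra scale br \<longleftrightarrow>
     vector_space scale \<and>
     (\<forall>x. Vector_Spaces.linear scale scale (br x)) \<and>
     (\<forall>y. Vector_Spaces.linear scale scale (\<lambda>x. br x y)) \<and>
     (\<forall>x. br x x = 0) \<and>
     (\<forall>x y z. br x (br y z) + br y (br z x) + br z (br x y) = 0)"

fun lcs :: "('k::field \<Rightarrow> 'v::ab_group_add \<Rightarrow> 'v) \<Rightarrow> ('v \<Rightarrow> 'v \<Rightarrow> 'v) \<Rightarrow> nat \<Rightarrow> 'v set" where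
  "lcs scale br 0 = UNIV"
| "lcs scale br (Suc 0) = UNIV"
| "lcs scale br (Suc (Suc k)) =
     module.span scale {br x y | x y. y \<in> lcs scale br (Suc k)}"

definition nilpotent_lie :: "('k::field \<Rightarrow> 'v::ab_group_add \<Rightarrow> 'v) \<Rightarrow> ('v \<Rightarrow> 'v \<Rightarrow> 'v) \<Rightarrow> bool" where
  "nilpotent_lie scale br \<longleftrightarrow> (\<exists>k\<ge>1. lcs scale br k = {0})"

definition filiform :: "('k::field \<Rightarrow> 'v::ab_group_add \<Rightarrow> 'v) \<Rightarrow> ('v \<Rightarrow> 'v \<Rightarrow> 'v) \<Rightarrow> nat \<Rightarrow> bool" where
  "filiform scale br n \<longleftrightarrow>
     lie_algebra scale br \<and> vector_space.dim scale (UNIV::'v set) = n \<and>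
     nilpotent_lie scale br \<and>
     (\<forall>k. 2 \<le> k \<and> k \<le> n \<longrightarrow> vector_space.dim scale (lcs scale br k) = n - k)"

definition is_basis_seq :: "('k::field \<Rightarrow> 'v::ab_group_add \<Rightarrow> 'v) \<Rightarrow> nat \<Rightarrow> (nat \<Rightarrow> 'v) \<Rightarrow> bool" where
  "is_basis_seq scale n e \<longleftrightarrow>
     inj_on e {1..n} \<and> \<not> module.dependent scale (e ` {1..n}) \<and>
     module.span scale (e ` {1..n}) = UNIV"

definition adapted_basis :: "('k::field \<Rightarrow> 'v::ab_group_add \<Rightarrow> 'v) \<Rightarrow> ('v \<Rightarrow> 'v \<Rightarrow> 'v) \<Rightarrow> nat \<Rightarrow> (nat \<Rightarrow> 'v) \<Rightarrow> bool" where
  "adapted_basis scale br n e \<longleftrightarrow>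
     is_basis_seq scale n e \<and>
     (\<forall>i. 2 \<le> i \<and> i \<le> n - 1 \<longrightarrow> br (e 1) (e i) = e (i + 1)) \<and>
     br (e 1) (e n) = 0 \<and>
     br (e 2) (e 3) \<in> module.span scale (e ` {5..n})"

definition stabilizer :: "('v \<Rightarrow> 'v \<Rightarrow> 'v) \<Rightarrow> ('v \<Rightarrow> 'k::zero) \<Rightarrow> 'v set" where
  "stabilizer br l = {y. \<forall>x. l (br x y) = 0}"

definition chi :: "('k::field \<Rightarrow> 'v::ab_group_add \<Rightarrow> 'v) \<Rightarrow> ('v \<Rightarrow> 'v \<Rightarrow> 'v) \<Rightarrow> nat" where
  "chi scale br = (LEAST d. \<exists>l. Vector_Spaces.linear scale (*) l \<and>
                              vector_space.dim scale (stabilizer br l) = d)"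

end

theory Submission imports Defs begin

context finite_dimensional_vector_space begin

lemma alt_parity:
  fixes B :: "'b \<Rightarrow> 'b \<Rightarrow> 'a"
  assumes addR: "\<And>x y z. B x (y + z) = B x y + B x z"
    and scR: "\<And>x c y. B x (scale c y) = c * B x y"
    and addL: "\<And>x y z. B (y + z) x = B y x + B z x"
    and scL: "\<And>x c y. B (scale c y) x = c * B y x"
    and alt: "\<And>x. B x x = 0"
    and S: "subspace S"
  shows "even (dim S - dim {y\<in>S. \<forall>x\<in>S. B x y = 0})"
proof -
  have zR: "B x 0 = 0" for x using scR[where x=x and c=0 and y=0] by simp
  have zL: "B 0 x = 0" for x using scL[where x=x and c=0 and y=0] by simp
  have negR: "B x (- y) = - B x y" for x y using addR[of x y "-y"] zR by (simp add: eq_neg_iff_add_eq_0 add.commute)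
  have negL: "B (- y) x = - B y x" for x y using addL[where x=x and y=y and z="-y"] zL by (simp add: eq_neg_iff_add_eq_0 add.commute)
  have diffR: "B x (y - z) = B x y - B x z" for x y z using addR[of x y "-z"] negR by simp
  have diffL: "B (y - z) x = B y x - B z x" for x y z using addL[where x=x and y=y and z="-z"] negL by simp
  have anti: "B y x = - B x y" for x y
  proof -
    have "0 = B (x+y) (x+y)" using alt by simp
    also have "\<dots> = B x x + B y x + (B x y + B y y)" by (simp only: addL addR)
    also have "\<dots> = B x y + B y x" by (simp add: alt add.commute)
    finally show ?thesis by (metis add.commute eq_neg_iff_add_eq_0)
  qed
  note simps = addR scR addL scL alt zR zL negR negL diffR diffL
  have main: "\<And>S. subspace S \<Longrightarrow> dim S = d \<Longrightarrow> even (dim S - dim {y\<in>S. \<forall>x\<in>S. B x y = 0})" for d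
  proof (induction d rule: less_induct)
    case (less d S)
    show ?case
    proof (cases "\<forall>x\<in>S. \<forall>y\<in>S. B x y = 0")
      case True
      then have "{y\<in>S. \<forall>x\<in>S. B x y = 0} = S" by auto
      then show ?thesis by simp
    next
      case False
      then obtain x y0 where x: "x \<in> S" and y0: "y0 \<in> S" and nz: "B x y0 \<noteq> 0" by blast
      define y where "y = scale (inverse (B x y0)) y0"
      have y: "y \<in> S" using y0 less.prems(1) by (simp add: y_def subspace_scale)
      have xy: "B x y = 1" using nz by (simp add: y_def scR)
      have yx: "B y x = -1" using anti[of y x] xy by simp
      define S' where "S' = {z\<in>S. B x z = 0 \<and> B y z = 0}"
      have subS': "subspace S'"
        using less.prems(1) unfolding subspace_def S'_def by (auto simp: simps)
      define p where "p z = z + scale (B y z) x - scale (B x z) y" for z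
      have pS': "p z \<in> S'" if "z \<in> S" for z
        using that x y less.prems(1) xy yx
        unfolding S'_def p_def by (auto simp: simps subspace_add subspace_diff subspace_scale)
      have decomp: "z = p z - scale (B y z) x + scale (B x z) y" for z
        unfolding p_def by simp
      have spxy: "span {x, y} \<subseteq> S" using x y less.prems(1) by (simp add: span_minimal)
      have sum_eq: "{a + b |a b. a \<in> S' \<and> b \<in> span {x, y}} = S"
      proof
        show "{a + b |a b. a \<in> S' \<and> b \<in> span {x, y}} \<subseteq> S"
          using spxy less.prems(1) by (auto simp: S'_def subspace_add)
      next
        show "S \<subseteq> {a + b |a b. a \<in> S' \<and> b \<in> span {x, y}}"
        proof
          fix z assume z: "z \<in> S"
          have "z = p z + (scale (B x z) y - scale (B y z) x)"
            by (simp add: p_def)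
          moreover have "scale (B x z) y - scale (B y z) x \<in> span {x, y}"
            by (intro span_diff span_scale span_base) auto
          ultimately show "z \<in> {a + b |a b. a \<in> S' \<and> b \<in> span {x, y}}"
            using pS'[OF z] by blast
        qed
      qed
      have int0: "S' \<inter> span {x, y} \<subseteq> {0}"
      proof
        fix w assume w: "w \<in> S' \<inter> span {x, y}"
        then obtain a where "w - scale a x \<in> span {y}" using span_breakdown_eq by blast
        then obtain b where wb: "w - scale a x = scale b y" by (auto simp: span_singleton)
        then have we: "w = scale a x + scale b y" by (simp add: algebra_simps)
        have "B x w = 0" "B y w = 0" using w by (auto simp: S'_def)
        then have "b = 0" "a = 0" using xy yx by (auto simp: we simps)
        then show "w \<in> {0}" using we by simp
      qed
      have y0': "y \<noteq> 0" using xy zR by auto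
      have "x \<notin> span {y}"
      proof
        assume "x \<in> span {y}"
        then obtain k where "x = scale k y" by (auto simp: span_singleton)
        then show False using xy by (simp add: simps)
      qed
      then have dxy: "dim (span {x, y}) = 2"
        using y0' by (simp add: dim_insert)
      have "dim S + dim (S' \<inter> span {x, y}) = dim S' + dim (span {x, y})"
        using dim_sums_Int[OF subS' subspace_span, of "{x,y}"] sum_eq by simp
      moreover have "dim (S' \<inter> span {x, y}) = 0" using int0 dim_eq_0 by blast
      ultimately have dS: "dim S = dim S' + 2" using dxy by simp
      have rad: "{y\<in>S. \<forall>x\<in>S. B x y = 0} = {y'\<in>S'. \<forall>x'\<in>S'. B x' y' = 0}"
      proof (intro set_eqI iffI)
        fix z assume "z \<in> {y\<in>S. \<forall>x\<in>S. B x y = 0}"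
        then show "z \<in> {y'\<in>S'. \<forall>x'\<in>S'. B x' y' = 0}" using x y by (auto simp: S'_def)
      next
        fix z assume z: "z \<in> {y'\<in>S'. \<forall>x'\<in>S'. B x' y' = 0}"
        have "B w z = 0" if w: "w \<in> S" for w
        proof -
          have "B w z = B (p w - scale (B y w) x + scale (B x w) y) z"
            using decomp[of w] by simp
          also have "\<dots> = B (p w) z - B y w * B x z + B x w * B y z" by (simp add: simps)
          also have "\<dots> = 0" using z pS'[OF w] by (auto simp: S'_def)
          finally show ?thesis .
        qed
        then show "z \<in> {y\<in>S. \<forall>x\<in>S. B x y = 0}" using z by (auto simp: S'_def)
      qed
      have le: "dim {y'\<in>S'. \<forall>x'\<in>S'. B x' y' = 0} \<le> dim S'" by (rule dim_subset) auto
      have "even (dim S' - dim {y'\<in>S'. \<forall>x'\<in>S'. B x' y' = 0})"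
        using less.IH[of "dim S'" S'] dS less.prems subS' by simp
      then show ?thesis using rad dS le by (simp add: Suc_diff_le)
    qed
  qed
  show ?thesis using main[OF S refl] .
qed
end


theorem proposition6p9:
  fixes scale :: "'k::field_char_0 \<Rightarrow> 'v::ab_group_add \<Rightarrow> 'v"
    and br :: "'v \<Rightarrow> 'v \<Rightarrow> 'v"
    and n :: nat and e :: "nat \<Rightarrow> 'v"
  assumes "4 \<le> n" and "even n"
    and "filiform scale br n"
    and "adapted_basis scale br n e"
    and "\<forall>i. 2 \<le> i \<and> i \<le> n - 1 \<longrightarrow> br (e i) (e (n + 1 - i)) = scale ((-1) ^ i) (e n)"
  shows "chi scale br = 2"
proof -
  have n4: "4 \<le> n" and nev: "even n" using assms(1,2) .
  have LA: "lie_algebra scale br"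
    and fil: "\<And>k. 2 \<le> k \<Longrightarrow> k \<le> n \<Longrightarrow> vector_space.dim scale (lcs scale br k) = n - k"
    using assms(3) by (auto simp: filiform_def)
  have VS: "vector_space scale" and lin1: "\<And>x. Vector_Spaces.linear scale scale (br x)"
    and lin2: "\<And>y. Vector_Spaces.linear scale scale (\<lambda>x. br x y)"
    and alt: "\<And>x. br x x = 0"
    and jac: "\<And>x y z. br x (br y z) + br y (br z x) + br z (br x y) = 0"
    using LA by (auto simp: lie_algebra_def)
  interpret vector_space scale by (rule VS)
  have VP: "vector_space_pair scale scale" by (simp add: vector_space_pair_def VS)
  have VK: "vector_space ((*)::'k\<Rightarrow>'k\<Rightarrow>'k)"
    by unfold_locales (simp_all add: algebra_simps)
  have VPK: "vector_space_pair scale ((*)::'k\<Rightarrow>'k\<Rightarrow>'k)"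
    by (simp add: vector_space_pair_def VS VK)
  have inj: "inj_on e {1..n}" and ind: "independent (e ` {1..n})"
    and spU: "span (e ` {1..n}) = UNIV"
    and e1: "\<And>i. 2 \<le> i \<Longrightarrow> i \<le> n - 1 \<Longrightarrow> br (e 1) (e i) = e (i + 1)"
    and e1n: "br (e 1) (e n) = 0"
    using assms(4) by (auto simp: adapted_basis_def is_basis_seq_def)
  have anti_e: "\<And>i. 2 \<le> i \<Longrightarrow> i \<le> n - 1 \<Longrightarrow> br (e i) (e (n + 1 - i)) = scale ((-1) ^ i) (e n)"
    using assms(5) by auto
  interpret FD: finite_dimensional_vector_space scale "e ` {1..n}"
    by unfold_locales (use ind spU in auto)
  have brR_add: "br x (a + b) = br x a + br x b" for x a b
    using vector_space_pair.linear_add[OF VP lin1] .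
  have brR_scale: "br x (scale c a) = scale c (br x a)" for x c a
    using vector_space_pair.linear_scale[OF VP lin1] .
  have brR_diff: "br x (a - b) = br x a - br x b" for x a b
    using vector_space_pair.linear_diff[OF VP lin1] .
  have brR_sum: "br x (sum g A) = (\<Sum>a\<in>A. br x (g a))" for x g and A :: "'z set"
    using vector_space_pair.linear_sum[OF VP lin1] .
  have brL_add: "br (a + b) x = br a x + br b x" for x a b
    using vector_space_pair.linear_add[OF VP lin2] .
  have brL_scale: "br (scale c a) x = scale c (br a x)" for x c a
    using vector_space_pair.linear_scale[OF VP lin2] .
  have brL_0: "br 0 x = 0" for x
    using brL_scale[of 0 0 x] by simp
  have brR_0: "br x 0 = 0" for x
    using brR_scale[of x 0 0] by simp
  have anti: "br y x = - br x y" for x y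
  proof -
    have "0 = br (x+y) (x+y)" using alt by simp
    also have "\<dots> = br x x + br y x + (br x y + br y y)" by (simp only: brL_add brR_add)
    also have "\<dots> = br x y + br y x" by (simp add: alt add.commute)
    finally show ?thesis by (metis add.commute eq_neg_iff_add_eq_0)
  qed
  have jac2: "br (br a c) z = br a (br c z) - br c (br a z)" for a c z
  proof -
    have "br a (br c z) + br c (br z a) + br z (br a c) = 0" by (rule jac)
    moreover have "br z a = - br a z" by (rule anti)
    moreover have "br z (br a c) = - br (br a c) z" by (rule anti)
    moreover have "br c (- br a z) = - br c (br a z)"
      using brR_diff[of c 0 "br a z"] brR_0 by simp
    ultimately show ?thesis by (simp add: algebra_simps eq_neg_iff_add_eq_0)
  qed
  have lcs_sub: "subspace (lcs scale br k)" for k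
  proof -
    consider "k = 0" | "k = Suc 0" | m where "k = Suc (Suc m)"
      by (metis not0_implies_Suc)
    then show ?thesis by cases (auto simp: subspace_UNIV)
  qed
  have lcs_mono1: "lcs scale br (Suc k) \<subseteq> lcs scale br k" for k
  proof (induction k)
    case 0 then show ?case by simp
  next
    case (Suc k)
    show ?case
    proof (cases k)
      case 0 then show ?thesis by simp
    next
      case (Suc m)
      have q1: "lcs scale br (Suc (Suc (Suc m))) = span {br x y |x y. y \<in> lcs scale br (Suc (Suc m))}"
        by (rule lcs.simps(3))
      have q2: "lcs scale br (Suc (Suc m)) = span {br x y |x y. y \<in> lcs scale br (Suc m)}"
        by (rule lcs.simps(3))
      have "span {br x y |x y. y \<in> lcs scale br (Suc (Suc m))} \<subseteq> span {br x y |x y. y \<in> lcs scale br (Suc m)}"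
        using Suc.IH Suc by (intro span_mono) blast
      then show ?thesis using Suc by (simp only: q1 q2)
    qed
  qed
  have lcs_mono: "k \<le> m \<Longrightarrow> lcs scale br m \<subseteq> lcs scale br k" for k m
    by (rule lift_Suc_antimono_le[of "lcs scale br"]) (use lcs_mono1 in auto)
  have br_in: "y \<in> lcs scale br (Suc k) \<Longrightarrow> br x y \<in> lcs scale br (Suc (Suc k))" for x y k
    by (auto intro!: span_base)
  have e_in: "e j \<in> lcs scale br (j - 1)" if "2 \<le> j" "j \<le> n" for j
    using that
  proof (induction j rule: nat_induct_at_least)
    case base then show ?case by simp
  next
    case (Suc j)
    then have "e j \<in> lcs scale br (Suc (j - 2))" by (simp add: numeral_2_eq_2 Suc_diff_Suc)
    then have "br (e 1) (e j) \<in> lcs scale br (Suc (Suc (j - 2)))" by (rule br_in)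
    moreover have "Suc (Suc (j - 2)) = Suc j - 1" using Suc by simp
    ultimately show ?case using e1[of j] Suc by simp
  qed
  have key0: "\<forall>b z. z \<in> lcs scale br (Suc b) \<longrightarrow> br (e i) z \<in> lcs scale br (Suc b + i - 1)"
    if "2 \<le> i" "i \<le> n" for i
    using that
  proof (induction i rule: nat_induct_at_least)
    case base then show ?case using br_in by simp
  next
    case (Suc i)
    show ?case
    proof (intro allI impI)
      fix b z assume z: "z \<in> lcs scale br (Suc b)"
      have eq: "br (e (Suc i)) z = br (e 1) (br (e i) z) - br (e i) (br (e 1) z)"
        using e1[of i] Suc jac2[of "e 1" "e i" z] by simp
      have "br (e i) z \<in> lcs scale br (Suc (b + i - 1))"
        using Suc z by simp
      then have "br (e 1) (br (e i) z) \<in> lcs scale br (Suc (Suc (b + i - 1)))"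
        by (rule br_in)
      moreover have "Suc (Suc (b + i - 1)) = Suc b + Suc i - 1" using Suc.hyps by simp
      ultimately have A: "br (e 1) (br (e i) z) \<in> lcs scale br (Suc b + Suc i - 1)" by metis
      have "br (e 1) z \<in> lcs scale br (Suc (Suc b))" using br_in z by simp
      moreover have IH: "\<forall>b z. z \<in> lcs scale br (Suc b) \<longrightarrow> br (e i) z \<in> lcs scale br (b + i)"
        using Suc by simp
      ultimately have "br (e i) (br (e 1) z) \<in> lcs scale br (Suc b + i)" by blast
      moreover have "Suc b + i = Suc b + Suc i - 1" by simp
      ultimately have B: "br (e i) (br (e 1) z) \<in> lcs scale br (Suc b + Suc i - 1)" by metis
      show "br (e (Suc i)) z \<in> lcs scale br (Suc b + Suc i - 1)"
        using eq A B lcs_sub subspace_diff by metis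
    qed
  qed
  have key: "br (e i) z \<in> lcs scale br (Suc b + i - 1)"
    if "2 \<le> i" "i \<le> n" "z \<in> lcs scale br (Suc b)" for i b z
    using key0[OF that(1,2)] that(3) by blast
  have lcsn: "lcs scale br n \<subseteq> {0}"
    using fil[of n] n4 FD.dim_eq_0 by simp
  have van: "br (e i) (e j) = 0" if "2 \<le> i" "i \<le> n" "2 \<le> j" "j \<le> n" "n + 2 \<le> i + j" for i j
  proof -
    have "e j \<in> lcs scale br (Suc (j - 2))" using e_in[of j] that by (simp add: numeral_2_eq_2 Suc_diff_Suc)
    then have "br (e i) (e j) \<in> lcs scale br (Suc (j - 2) + i - 1)" using key that by blast
    moreover have "lcs scale br (Suc (j - 2) + i - 1) \<subseteq> lcs scale br n"
      using that by (intro lcs_mono) simp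
    ultimately show ?thesis using lcsn by blast
  qed
  have central: "br x (e n) = 0" for x
  proof -
    have sub: "subspace {x. br x (e n) = 0}"
      unfolding subspace_def by (auto simp: brL_add brL_scale brL_0)
    have "e ` {1..n} \<subseteq> {x. br x (e n) = 0}"
    proof
      fix v assume "v \<in> e ` {1..n}"
      then obtain i where i: "1 \<le> i" "i \<le> n" "v = e i" by auto
      show "v \<in> {x. br x (e n) = 0}"
      proof (cases "i = 1")
        case True then show ?thesis using e1n i by simp
      next
        case False then show ?thesis using van[of i n] i n4 by simp
      qed
    qed
    then have "span (e ` {1..n}) \<subseteq> {x. br x (e n) = 0}" using sub span_minimal by blast
    then show ?thesis using spU by auto
  qed
  have en0: "e n \<noteq> 0"
  proof
    assume "e n = 0"
    then have "0 \<in> e ` {1..n}" using n4 by force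
    then show False using ind dependent_zero by blast
  qed
  have cardB: "card (e ` {1..n}) = n" using card_image[OF inj] by simp
  have dimU: "dim (UNIV :: 'v set) = n" using cardB by simp
  have lower: "2 \<le> dim (stabilizer br l)" if ll: "Vector_Spaces.linear scale (*) l" for l
  proof -
    have l_add: "l (a + b) = l a + l b" for a b
      using vector_space_pair.linear_add[OF VPK ll] .
    have l_scale: "l (scale c a) = c * l a" for c a
      using vector_space_pair.linear_scale[OF VPK ll] .
    have l0: "l 0 = 0" using l_scale[of 0 0] by simp
    have par: "even (dim (UNIV :: 'v set) - dim {y\<in>UNIV. \<forall>x\<in>UNIV. l (br x y) = 0})"
      by (rule FD.alt_parity) (simp_all add: brR_add brR_scale brL_add brL_scale l_add l_scale alt l0)
    have st: "{y\<in>UNIV. \<forall>x\<in>UNIV. l (br x y) = 0} = stabilizer br l"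
      by (simp add: stabilizer_def)
    have le: "dim (stabilizer br l) \<le> n" using FD.dim_subset[of "stabilizer br l" UNIV] dimU by simp
    have "e n \<in> stabilizer br l" by (simp add: stabilizer_def central l0)
    then have "dim (stabilizer br l) \<noteq> 0" using en0 FD.dim_eq_0 by blast
    moreover have "even (dim (stabilizer br l))"
    proof -
      have "even (n - dim (stabilizer br l))" using par st dimU by simp
      then have "even (n + dim (stabilizer br l))" using le by (simp add: even_diff_nat)
      then show ?thesis using nev by simp
    qed
    moreover have "\<And>d::nat. d \<noteq> 0 \<Longrightarrow> even d \<Longrightarrow> 2 \<le> d" by (auto elim!: evenE)
    ultimately show ?thesis by blast
  qed
  define l0 where "l0 v = representation (e ` {1..n}) v (e n)" for v
  have ll0: "Vector_Spaces.linear scale (*) l0"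
    unfolding l0_def[abs_def] by (rule linear_representation[OF ind spU])
  have l_add: "l0 (a + b) = l0 a + l0 b" for a b
    using vector_space_pair.linear_add[OF VPK ll0] .
  have l_scale: "l0 (scale c a) = c * l0 a" for c a
    using vector_space_pair.linear_scale[OF VPK ll0] .
  have l_sum: "l0 (sum g A) = (\<Sum>a\<in>A. l0 (g a))" for g and A :: "'z set"
    using vector_space_pair.linear_sum[OF VPK ll0] .
  have l_0: "l0 0 = 0" using l_scale[of 0 0] by simp
  have l0e: "l0 (e j) = (if j = n then 1 else 0)" if "1 \<le> j" "j \<le> n" for j
  proof -
    have "l0 (e j) = (if e n = e j then 1 else 0)"
      unfolding l0_def using representation_basis[OF ind, of "e j"] that by simp
    moreover have "e n = e j \<longleftrightarrow> j = n" using inj that n4 by (auto dest: inj_onD)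
    ultimately show ?thesis by simp
  qed
  define St where "St = stabilizer br l0"
  have subSt: "subspace St"
    unfolding subspace_def St_def stabilizer_def by (auto simp: brR_add brR_scale l_add l_scale brR_0 l_0)
  define T where "T = span (e ` {2..n-1})"
  have injT: "inj_on e {2..n-1}" using inj by (rule inj_on_subset) auto
  have dimT: "dim T = n - 2"
  proof -
    have "independent (e ` {2..n-1})" using ind by (rule independent_mono) auto
    then have "dim T = card (e ` {2..n-1})" unfolding T_def by (rule dim_span_eq_card_independent)
    also have "\<dots> = n - 2" using card_image[OF injT] n4 by simp
    finally show ?thesis .
  qed
  have int0: "St \<inter> T \<subseteq> {0}"
  proof
    fix y assume y: "y \<in> St \<inter> T"
    then obtain u where "y = (\<Sum>v\<in>e ` {2..n-1}. scale (u v) v)"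
      unfolding T_def using span_finite[of "e ` {2..n-1}"] by auto
    then have yeq: "y = (\<Sum>j\<in>{2..n-1}. scale (u (e j)) (e j))"
      using sum.reindex[OF injT, of "\<lambda>v. scale (u v) v"] by simp
    define c where "c j = u (e j)" for j
    have yst: "l0 (br x y) = 0" for x using y by (auto simp: St_def stabilizer_def)
    have lbr: "l0 (br (e m) y) = (\<Sum>i\<in>{2..n-1}. c i * l0 (br (e m) (e i)))" for m
      unfolding yeq c_def by (simp add: brR_sum brR_scale l_sum l_scale)
    have cz: "c j = 0" if "2 \<le> j" "j \<le> n - 1" for j
      using that
    proof (induction j rule: less_induct)
      case (less j)
      define m where "m = n + 1 - j"
      have m: "2 \<le> m" "m \<le> n - 1" "n + 1 - m = j" using less.prems n4 by (auto simp: m_def)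
      have terms: "c i * l0 (br (e m) (e i)) = (if i = j then c j * (-1) ^ m else 0)"
        if i: "i \<in> {2..n-1}" for i
      proof (cases "i < j")
        case True
        have "c i = 0" using less.IH[of i] i True by simp
        then show ?thesis using True by simp
      next
        case False
        show ?thesis
        proof (cases "i = j")
          case True
          have "br (e m) (e i) = scale ((-1) ^ m) (e n)" using anti_e[of m] m True by simp
          then show ?thesis using True l0e[of n] n4 by (simp add: l_scale)
        next
          case ne: False
          have "n + 2 \<le> m + i" using m_def less.prems False ne n4 by simp
          moreover have "2 \<le> i" "i \<le> n" using i by auto
          ultimately have "br (e m) (e i) = 0" using van[of m i] m n4 by simp
          then show ?thesis using ne l_0 by simp
        qed
      qed
      have "0 = l0 (br (e m) y)" using yst by simp
      also have "\<dots> = (\<Sum>i\<in>{2..n-1}. if i = j then c j * (-1) ^ m else 0)"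
        unfolding lbr by (rule sum.cong) (use terms in auto)
      also have "\<dots> = c j * (-1) ^ m" using less.prems by simp
      finally show ?case by simp
    qed
    have "y = (\<Sum>j\<in>{2..n-1}. scale (c j) (e j))" using yeq by (simp add: c_def)
    also have "\<dots> = 0" using cz by simp
    finally show "y \<in> {0}" by simp
  qed
  have upper: "dim St \<le> 2"
  proof -
    have sT: "subspace T" unfolding T_def by simp
    have "dim {x + y |x y. x \<in> St \<and> y \<in> T} + dim (St \<inter> T) = dim St + dim T"
      by (rule FD.dim_sums_Int[OF subSt sT])
    moreover have "dim (St \<inter> T) = 0" using int0 FD.dim_eq_0 by blast
    moreover have "dim {x + y |x y. x \<in> St \<and> y \<in> T} \<le> n"
      using FD.dim_subset[of "{x + y |x y. x \<in> St \<and> y \<in> T}" UNIV] dimU by simp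
    ultimately show ?thesis using dimT n4 by linarith
  qed
  have d2: "dim (stabilizer br l0) = 2" using upper lower[OF ll0] by (simp add: St_def)
  show ?thesis
    unfolding chi_def
  proof (rule Least_equality)
    show "\<exists>l. Vector_Spaces.linear scale (*) l \<and> dim (stabilizer br l) = 2"
      using ll0 d2 by blast
  next
    fix d assume "\<exists>l. Vector_Spaces.linear scale (*) l \<and> dim (stabilizer br l) = d"
    then show "2 \<le> d" using lower by blast
  qed
qed

end
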